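(* Let $\alpha,\beta>0$ and $X\sim\mathsf{Beta}(\alpha,\beta)$. For every odd integer $d\ge 3$, the central moment $\mathbf{E}[(X-\mathbf{E}[X])^d]$ has the same sign as $\beta-\alpha$: it is positive if $\beta>\alpha$, negative if $\beta<\alpha$, and zero if $\beta=\alpha$.
   Context: $\mathsf{Beta}(\alpha,\beta)$ denotes the distribution on $[0,1]$ with density proportional to $x^{\alpha-1}(1-x)^{\beta-1}$. *)

theory Defs
  imports "HOL-Probability.Probability"
begin

text \<open>The density is taken zero outside
  the open interval (0,1) (the endpoints form a null set).\<close>
definition beta_density :: "real \<Rightarrow> real \<Rightarrow> real \<Rightarrow> ennreal" where
  "beta_density a b x =
     ennreal (indicator {0<..<1} x * x powr (a - 1) * (1 - x) powr (b - 1) / Beta a b)"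

end

theory Submission
  imports Defs
begin

definition bdens :: "real \<Rightarrow> real \<Rightarrow> real \<Rightarrow> real" where
  "bdens a b x = indicator {0<..<1} x * x powr (a - 1) * (1 - x) powr (b - 1) / Beta a b"

lemma Beta_pos: "a > 0 \<Longrightarrow> b > 0 \<Longrightarrow> Beta a b > (0::real)"
  unfolding Beta_def by auto

lemma binom_deriv:
  fixes x y :: real
  shows "(\<Sum>j\<le>Suc n. real j * real (Suc n choose j) * x ^ j * y ^ (Suc n - j)) = real (Suc n) * x * (x + y) ^ n"
proof -
  have "(\<Sum>j\<le>Suc n. real j * real (Suc n choose j) * x ^ j * y ^ (Suc n - j))
      = (\<Sum>i\<le>n. real (Suc i) * real (Suc n choose Suc i) * x ^ Suc i * y ^ (Suc n - Suc i))"
    by (subst sum.atMost_Suc_shift) simp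
  also have "\<dots> = (\<Sum>i\<le>n. real (Suc n) * x * (real (n choose i) * x ^ i * y ^ (n - i)))"
  proof (rule sum.cong[OF refl])
    fix i
    have "real (Suc i) * real (Suc n choose Suc i) = real (Suc n) * real (n choose i)"
      by (metis Suc_times_binomial of_nat_mult)
    thus "real (Suc i) * real (Suc n choose Suc i) * x ^ Suc i * y ^ (Suc n - Suc i)
        = real (Suc n) * x * (real (n choose i) * x ^ i * y ^ (n - i))"
      by (simp add: algebra_simps)
  qed
  also have "\<dots> = real (Suc n) * x * (x + y) ^ n"
    by (simp add: binomial_ring sum_distrib_left)
  finally show ?thesis .
qed

locale beta_rv = prob_space M for M :: "'s measure" +
  fixes X :: "'s \<Rightarrow> real" and a b :: real
  assumes apos: "a > 0" and bpos: "b > 0"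
    and dist: "distributed M lborel X (beta_density a b)"
begin

lemma dist': "distributed M lborel X (\<lambda>x. ennreal (bdens a b x))"
  using dist unfolding beta_density_def bdens_def by simp

lemma bdens_nonneg: "bdens a b x \<ge> 0"
  unfolding bdens_def using Beta_pos[OF apos bpos] by (auto simp: indicator_def)

lemma Xmeas[measurable]: "X \<in> borel_measurable M"
  using dist' by (auto dest: distributed_measurable)

lemma bdens_meas[measurable]: "bdens a b \<in> borel_measurable borel"
  unfolding bdens_def by measurable

lemma AE_X: "AE \<omega> in M. X \<omega> \<in> {0..1}"
proof -
  have "AE x in density lborel (\<lambda>x. ennreal (bdens a b x)). x \<in> {0..1}"
    by (subst AE_density) (auto simp: bdens_def indicator_def)
  hence "AE x in distr M lborel X. x \<in> {0..1}"
    by (subst distributed_distr_eq_density[OF dist'])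
  thus ?thesis by (rule AE_distrD[rotated]) simp
qed

lemma integrable_cont:
  fixes g :: "real \<Rightarrow> real"
  assumes "continuous_on UNIV g"
  shows "integrable M (\<lambda>\<omega>. g (X \<omega>))"
proof -
  have "compact (g ` {0..1::real})"
    by (rule compact_continuous_image) (use assms continuous_on_subset in auto)
  then obtain B where B: "\<And>y. y \<in> g ` {0..1} \<Longrightarrow> norm y \<le> B"
    using compact_imp_bounded bounded_iff by metis
  have gm: "g \<in> borel_measurable borel"
    using assms by (rule borel_measurable_continuous_onI)
  show ?thesis
  proof (intro integrable_const_bound[where B=B])
    show "AE \<omega> in M. norm (g (X \<omega>)) \<le> B" using AE_X by eventually_elim (use B in auto)
    show "(\<lambda>\<omega>. g (X \<omega>)) \<in> borel_measurable M" using gm by measurable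
  qed
qed

lemma bdens_pow: "bdens a b x * x ^ j =
   indicator {0..1} x *\<^sub>R (x powr (a + real j - 1) * (1 - x) powr (b - 1)) / Beta a b"
proof (cases "x \<in> {0<..<1}")
  case True
  hence "x ^ j * x powr (a - 1) = x powr (a + real j - 1)"
    by (simp add: powr_realpow[symmetric] powr_add[symmetric] algebra_simps)
  thus ?thesis using True by (simp add: bdens_def indicator_def algebra_simps)
next
  case False
  thus ?thesis by (cases "x = 0 \<or> x = 1") (auto simp: bdens_def indicator_def)
qed

lemma moment_int: "integrable M (\<lambda>\<omega>. X \<omega> ^ j)"
  by (rule integrable_cont) (intro continuous_intros)

lemma moment: "integral\<^sup>L M (\<lambda>\<omega>. X \<omega> ^ j) = Beta (a + real j) b / Beta a b"
proof -
  have aj: "a + real j > 0" using apos by simp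
  have "integral\<^sup>L M (\<lambda>\<omega>. X \<omega> ^ j) = (LINT x|lborel. bdens a b x * x ^ j)"
    by (rule distributed_integral[OF dist', symmetric]) (auto simp: bdens_nonneg)
  also have "\<dots> = (LINT x|lborel. indicator {0..1} x *\<^sub>R (x powr (a + real j - 1) * (1 - x) powr (b - 1))) / Beta a b"
    unfolding bdens_pow by simp
  also have "(LINT x|lborel. indicator {0..1} x *\<^sub>R (x powr (a + real j - 1) * (1 - x) powr (b - 1)))
     = integral {0..1} (\<lambda>x. x powr (a + real j - 1) * (1 - x) powr (b - 1))"
    using set_borel_integral_eq_integral(2)[OF integrable_Beta[OF aj bpos]]
    by (simp add: set_lebesgue_integral_def)
  also have "\<dots> = Beta (a + real j) b"
    using has_integral_Beta_real[OF aj bpos] by (rule integral_unique)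
  finally show ?thesis .
qed

lemma notnp: "(x::real) > 0 \<Longrightarrow> x \<notin> \<int>\<^sub>\<le>\<^sub>0"
  by (auto elim!: nonpos_Ints_cases)

lemma moment_rec: "integral\<^sup>L M (\<lambda>\<omega>. X \<omega> ^ Suc j) * (a + b + real j)
    = (a + real j) * integral\<^sup>L M (\<lambda>\<omega>. X \<omega> ^ j)"
proof -
  have "(a + real j + b) * Beta (a + real j + 1) b = (a + real j) * Beta (a + real j) b"
    by (rule Beta_plus1_left) (rule notnp, use apos in simp)
  thus ?thesis unfolding moment using Beta_pos[OF apos bpos]
    by (simp add: field_simps)
qed

lemma P1: "prob (space M) = 1" using emeasure_space_1 by (simp add: measure_def)

definition "mu = a / (a + b)"

lemma mu_eq: "integral\<^sup>L M X = mu"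
  using moment_rec[of 0] apos bpos unfolding mu_def by (simp add: field_simps P1)

lemma mu_bounds: "0 < mu" "mu < 1"
  using apos bpos unfolding mu_def by (auto simp: field_simps)

lemma stein_mono: "integral\<^sup>L M (\<lambda>\<omega>. X \<omega> ^ j * ((a + b) * (X \<omega> - mu) - real j * (1 - X \<omega>))) = 0"
proof -
  have eq: "\<And>\<omega>. X \<omega> ^ j * ((a + b) * (X \<omega> - mu) - real j * (1 - X \<omega>))
     = (a + b + real j) * X \<omega> ^ Suc j - (a + real j) * X \<omega> ^ j"
    using apos bpos unfolding mu_def by (simp add: field_simps)
  have "integral\<^sup>L M (\<lambda>\<omega>. (a + b + real j) * X \<omega> ^ Suc j - (a + real j) * X \<omega> ^ j)
     = integral\<^sup>L M (\<lambda>\<omega>. (a + b + real j) * X \<omega> ^ Suc j) - integral\<^sup>L M (\<lambda>\<omega>. (a + real j) * X \<omega> ^ j)"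
    by (rule Bochner_Integration.integral_diff) (intro integrable_mult_right moment_int)+
  also have "\<dots> = 0" unfolding integral_mult_right_zero using moment_rec[of j] by (simp add: mult.commute)
  finally show ?thesis unfolding eq .
qed

definition "cm k = integral\<^sup>L M (\<lambda>\<omega>. (X \<omega> - mu) ^ k)"

lemma cpow_int: "integrable M (\<lambda>\<omega>. (X \<omega> - mu) ^ k)"
  by (rule integrable_cont) (intro continuous_intros)

lemma cm0: "cm 0 = 1" unfolding cm_def by (simp add: P1)

lemma cm1: "cm 1 = 0"
proof -
  have "integral\<^sup>L M (\<lambda>\<omega>. X \<omega> - mu) = integral\<^sup>L M X - integral\<^sup>L M (\<lambda>\<omega>. mu)"
    using moment_int[of 1] by (intro Bochner_Integration.integral_diff) auto
  thus ?thesis using mu_eq unfolding cm_def by (simp add: P1)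
qed

lemma pt_identity:
  fixes x :: real
  shows "(\<Sum>j\<le>Suc n. real (Suc n choose j) * (-mu) ^ (Suc n - j) * (x ^ j * ((a + b) * (x - mu) - real j * (1 - x))))
     = (a + b + real (Suc n)) * (x - mu) ^ Suc (Suc n) - real (Suc n) * mu * (1 - mu) * (x - mu) ^ n
        - real (Suc n) * (1 - 2 * mu) * (x - mu) ^ Suc n"
proof -
  have s1: "(\<Sum>j\<le>Suc n. real (Suc n choose j) * x ^ j * (-mu) ^ (Suc n - j)) = (x - mu) ^ Suc n"
    using binomial_ring[of x "-mu" "Suc n"] by simp
  have s2: "(\<Sum>j\<le>Suc n. real j * real (Suc n choose j) * x ^ j * (-mu) ^ (Suc n - j)) = real (Suc n) * x * (x - mu) ^ n"
    using binom_deriv[of n x "-mu"] by simp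
  have "(\<Sum>j\<le>Suc n. real (Suc n choose j) * (-mu) ^ (Suc n - j) * (x ^ j * ((a + b) * (x - mu) - real j * (1 - x))))
      = (\<Sum>j\<le>Suc n. (a + b) * (x - mu) * (real (Suc n choose j) * x ^ j * (-mu) ^ (Suc n - j))
           - (1 - x) * (real j * real (Suc n choose j) * x ^ j * (-mu) ^ (Suc n - j)))"
    by (rule sum.cong[OF refl]) (simp add: algebra_simps)
  also have "\<dots> = (a + b) * (x - mu) * (x - mu) ^ Suc n - (1 - x) * (real (Suc n) * x * (x - mu) ^ n)"
    by (simp only: sum_subtractf sum_distrib_left[symmetric] s1 s2)
  also have "\<dots> = (a + b + real (Suc n)) * (x - mu) ^ Suc (Suc n) - real (Suc n) * mu * (1 - mu) * (x - mu) ^ n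
        - real (Suc n) * (1 - 2 * mu) * (x - mu) ^ Suc n"
    by (simp add: algebra_simps)
  finally show ?thesis .
qed

lemma stein_central:
  "(a + b + real (Suc n)) * cm (Suc (Suc n)) - real (Suc n) * mu * (1 - mu) * cm n
     - real (Suc n) * (1 - 2 * mu) * cm (Suc n) = 0"
proof -
  have ij: "integrable M (\<lambda>\<omega>. X \<omega> ^ j * ((a + b) * (X \<omega> - mu) - real j * (1 - X \<omega>)))" for j
  proof -
    have "continuous_on UNIV (\<lambda>x. x ^ j * ((a + b) * (x - mu) - real j * (1 - x)))"
      by (intro continuous_intros)
    from integrable_cont[OF this] show ?thesis by simp
  qed
  have "integral\<^sup>L M (\<lambda>\<omega>. \<Sum>j\<le>Suc n. real (Suc n choose j) * (-mu) ^ (Suc n - j) *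
          (X \<omega> ^ j * ((a + b) * (X \<omega> - mu) - real j * (1 - X \<omega>))))
      = (\<Sum>j\<le>Suc n. integral\<^sup>L M (\<lambda>\<omega>. real (Suc n choose j) * (-mu) ^ (Suc n - j) *
          (X \<omega> ^ j * ((a + b) * (X \<omega> - mu) - real j * (1 - X \<omega>)))))"
    by (rule Bochner_Integration.integral_sum) (intro integrable_mult_right ij)
  also have "\<dots> = 0"
    by (simp only: integral_mult_right_zero stein_mono) simp
  finally have z: "integral\<^sup>L M (\<lambda>\<omega>. (a + b + real (Suc n)) * (X \<omega> - mu) ^ Suc (Suc n)
        - real (Suc n) * mu * (1 - mu) * (X \<omega> - mu) ^ n
        - real (Suc n) * (1 - 2 * mu) * (X \<omega> - mu) ^ Suc n) = 0"
    unfolding pt_identity .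
  have "integral\<^sup>L M (\<lambda>\<omega>. (a + b + real (Suc n)) * (X \<omega> - mu) ^ Suc (Suc n)
        - real (Suc n) * mu * (1 - mu) * (X \<omega> - mu) ^ n
        - real (Suc n) * (1 - 2 * mu) * (X \<omega> - mu) ^ Suc n)
     = integral\<^sup>L M (\<lambda>\<omega>. (a + b + real (Suc n)) * (X \<omega> - mu) ^ Suc (Suc n)
        - real (Suc n) * mu * (1 - mu) * (X \<omega> - mu) ^ n)
       - integral\<^sup>L M (\<lambda>\<omega>. real (Suc n) * (1 - 2 * mu) * (X \<omega> - mu) ^ Suc n)"
    by (intro Bochner_Integration.integral_diff Bochner_Integration.integrable_diff integrable_mult_right cpow_int)
  also have "\<dots> = integral\<^sup>L M (\<lambda>\<omega>. (a + b + real (Suc n)) * (X \<omega> - mu) ^ Suc (Suc n))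
        - integral\<^sup>L M (\<lambda>\<omega>. real (Suc n) * mu * (1 - mu) * (X \<omega> - mu) ^ n)
       - integral\<^sup>L M (\<lambda>\<omega>. real (Suc n) * (1 - 2 * mu) * (X \<omega> - mu) ^ Suc n)"
    by (subst Bochner_Integration.integral_diff) ((intro integrable_mult_right cpow_int)+, simp)
  finally show ?thesis using z unfolding cm_def integral_mult_right_zero by simp
qed

lemma signs: "cm (2 * n) > 0 \<and> (\<exists>q. q \<ge> 0 \<and> (n > 0 \<longrightarrow> q > 0) \<and> cm (2 * n + 1) = (1 - 2 * mu) * q)"
proof (induction n)
  case 0
  thus ?case using cm0 cm1 by auto
next
  case (Suc n)
  from Suc.IH obtain q where e0: "cm (2 * n) > 0" and q: "q \<ge> 0" "cm (2 * n + 1) = (1 - 2 * mu) * q"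
    by blast
  have ab: "a + b > 0" using apos bpos by simp
  have mm: "mu * (1 - mu) > 0" using mu_bounds by simp
  have q2: "cm (Suc (2 * n)) = (1 - 2 * mu) * q" using q(2) by simp
  note r1 = stein_central[of "2 * n"]
  note r2 = stein_central[of "Suc (2 * n)"]
  have "(a + b + real (Suc (2 * n))) * cm (Suc (Suc (2 * n)))
      = real (Suc (2 * n)) * (mu * (1 - mu)) * cm (2 * n) + real (Suc (2 * n)) * (1 - 2 * mu) ^ 2 * q"
    using r1 unfolding q2 power2_eq_square by (simp add: algebra_simps)
  also have "\<dots> > 0"
    using mm e0 q mu_bounds by (intro add_pos_nonneg mult_pos_pos mult_nonneg_nonneg) auto
  finally have e1: "cm (2 * Suc n) > 0"
    using ab by (simp add: zero_less_mult_iff)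
  define q' where "q' = (real (Suc (Suc (2 * n))) * (mu * (1 - mu)) * q + real (Suc (Suc (2 * n))) * cm (2 * Suc n))
                     / (a + b + real (Suc (Suc (2 * n))))"
  have q'pos: "q' > 0" unfolding q'_def using mm q e1 ab
    using mu_bounds by (intro divide_pos_pos add_nonneg_pos mult_nonneg_nonneg mult_pos_pos) auto
  have "cm (2 * Suc n + 1) = (1 - 2 * mu) * q'"
    using r2 ab unfolding q2 q'_def by (simp add: field_simps)
  thus ?case using e1 q'pos by (intro conjI exI[of _ q']) auto
qed

end

theorem mainTheorem4:
  fixes M :: "'s measure" and X :: "'s \<Rightarrow> real" and a b :: real and d :: nat
  assumes "prob_space M"
    and "a > 0" and "b > 0"
    and "distributed M lborel X (beta_density a b)"
    and "odd d" and "d \<ge> 3"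
  shows "sgn (prob_space.expectation M (\<lambda>\<omega>. (X \<omega> - prob_space.expectation M X) ^ d))
           = sgn (b - a)"
proof -
  interpret beta_rv M X a b
    using assms by (simp add: beta_rv_def beta_rv_axioms_def)
  obtain n where n: "d = 2 * n + 1" "n > 0" using assms(5,6) by (metis oddE Suc_le_eq less_Suc_eq_0_disj not_less_eq_eq numeral_3_eq_3 add.commute plus_1_eq_Suc mult_0_right add_0 le_SucE gr0I)
  obtain q where q: "q > 0" "cm d = (1 - 2 * mu) * q" using signs[of n] n by auto
  have c: "1 - 2 * mu = (b - a) / (a + b)" using assms(2,3) unfolding mu_def by (simp add: field_simps)
  have "sgn (cm d) = sgn (b - a)"
    using q assms(2,3) unfolding c by (simp add: sgn_mult)
  thus ?thesis unfolding cm_def mu_eq .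
qed

end
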